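(* Let $\mathcal{B}$ be a real uniform Banach space and $\Omega:\mathcal{B}\to\mathbb{R}$ admissible. Let $m\in\mathbb{N}$ and data $(x_i,y_i)_{i=1}^m\subset\mathcal{B}\times\mathbb{R}$ be such that the constraints $[f,x_i]=y_i$ ($i=1,\dots,m$) can be satisfied. Let $f_0\in\mathcal{B}$ be such that $f_0^*=\sum_{i=1}^m c_ix_i^*$ for some $c_1,\dots,c_m\in\mathbb{R}$. Then $f_0$ is a solution of the regularised interpolation problem $\min\{\Omega(f): f\in\mathcal{B},\ [f,x_i]=y_i\ \forall i\}$ if and only if $f_0$ is a solution of the minimal norm interpolation problem $\min\{\|f\|: f\in\mathcal{B},\ [f,x_i]=y_i\ \forall i\}$.
   Context: A real Banach space $\mathcal{B}$ is called uniform if it is uniformly convex and uniformly smooth (equivalently, its norm is uniformly Fréchet differentiable). On such a space there is a unique semi-inner product inducing the norm, i.e. a unique map $[\cdot,\cdot]:\mathcal{B}\times\mathcal{B}\to\mathbb{R}$ that is linear in the first argument, satisfies $[x,x]=\|x\|^2$, $|[x,y]|^2\le[x,x][y,y]$ and $[x,\lambda y]=\lambda[x,y]$ for $\lambda\in\mathbb{R}$; it is given by $[y,x]=\|x\|\lim_{t\to0}\frac{\|x+ty\|-\|x\|}{t}$ for $x\neq0$ (and $[y,0]=0$). The duality map $x\mapsto x^*$, $x^*(y)=[y,x]$, is a (nonlinear in general, but positively and negatively homogeneous) isometric bijection $\mathcal{B}\to\mathcal{B}^*$. Given $m\in\mathbb{N}$ and data $(x_i,y_i)\in\mathcal{B}\times\mathbb{R}$,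 $i=1,\dots,m$, the regularised interpolation problem is $\min\{\Omega(f): f\in\mathcal{B},\ [f,x_i]=y_i\ \forall i=1,\dots,m\}$. A function $\Omega:\mathcal{B}\to\mathbb{R}$ is called admissible if for every $m\in\mathbb{N}$ and every data $(x_i,y_i)_{i=1}^m\subset\mathcal{B}\times\mathbb{R}$ for which the constraints $[f,x_i]=y_i$ can be satisfied, the regularised interpolation problem has a minimiser $f_0$ whose dual element satisfies $f_0^*=\sum_{i=1}^m c_i x_i^*$ for some $c_i\in\mathbb{R}$. *)

theory Defs
  imports "HOL-Analysis.Analysis"
begin

definition uniformly_convex :: "'a::real_normed_vector itself \<Rightarrow> bool" where
  "uniformly_convex _ \<longleftrightarrow>
     (\<forall>\<epsilon>>0. \<exists>\<delta>>0. \<forall>x y::'a. norm x \<le> 1 \<and> norm y \<le> 1 \<and> norm (x - y) \<ge> \<epsilon>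
        \<longrightarrow> norm ((1/2) *\<^sub>R (x + y)) \<le> 1 - \<delta>)"

definition modulus_of_smoothness :: "'a::real_normed_vector itself \<Rightarrow> real \<Rightarrow> real" where
  "modulus_of_smoothness _ \<tau> =
     (SUP p \<in> {(x, y::'a). norm x = 1 \<and> norm y = \<tau>}.
        (norm (fst p + snd p) + norm (fst p - snd p)) / 2 - 1)"

definition uniformly_smooth :: "'a::real_normed_vector itself \<Rightarrow> bool" where
  "uniformly_smooth T \<longleftrightarrow>
     ((\<lambda>\<tau>. modulus_of_smoothness T \<tau> / \<tau>) \<longlongrightarrow> 0) (at_right 0)"

definition uniform_space :: "'a::banach itself \<Rightarrow> bool" where
  "uniform_space T \<longleftrightarrow> uniformly_convex T \<and> uniformly_smooth T"

definition sip :: "'a::real_normed_vector \<Rightarrow> 'a \<Rightarrow> real" where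
  "sip y x = (if x = 0 then 0
              else norm x * Lim (at (0::real)) (\<lambda>t. (norm (x + t *\<^sub>R y) - norm x) / t))"

text \<open>Constraints [f, x_i] = y_i for i < m (data indexed 0..m-1).\<close>
definition interpolates :: "nat \<Rightarrow> (nat \<Rightarrow> 'a::real_normed_vector) \<Rightarrow> (nat \<Rightarrow> real) \<Rightarrow> 'a \<Rightarrow> bool" where
  "interpolates m xs ys f \<longleftrightarrow> (\<forall>i<m. sip f (xs i) = ys i)"

definition is_interp_min :: "('a::real_normed_vector \<Rightarrow> real) \<Rightarrow> nat \<Rightarrow> (nat \<Rightarrow> 'a) \<Rightarrow> (nat \<Rightarrow> real) \<Rightarrow> 'a \<Rightarrow> bool" where
  "is_interp_min \<Omega> m xs ys f0 \<longleftrightarrow>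
     interpolates m xs ys f0 \<and> (\<forall>f. interpolates m xs ys f \<longrightarrow> \<Omega> f0 \<le> \<Omega> f)"

text \<open>f0^* = sum_i c_i x_i^*, as functionals y \<mapsto> [y, .].\<close>
definition dual_in_span :: "nat \<Rightarrow> (nat \<Rightarrow> 'a::real_normed_vector) \<Rightarrow> 'a \<Rightarrow> bool" where
  "dual_in_span m xs f0 \<longleftrightarrow>
     (\<exists>c::nat \<Rightarrow> real. \<forall>y. sip y f0 = (\<Sum>i<m. c i * sip y (xs i)))"

definition admissible :: "('a::real_normed_vector \<Rightarrow> real) \<Rightarrow> bool" where
  "admissible \<Omega> \<longleftrightarrow>
     (\<forall>m xs ys. m \<ge> 1 \<and> (\<exists>f. interpolates m xs ys f) \<longrightarrow>
        (\<exists>f0. is_interp_min \<Omega> m xs ys f0 \<and> dual_in_span m xs f0))"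

end

theory Submission
  imports Defs
begin

definition dq :: "'a::real_normed_vector \<Rightarrow> 'a \<Rightarrow> real \<Rightarrow> real" where
  "dq x y t = (norm (x + t *\<^sub>R y) - norm x) / t"

lemma sip_dq: "sip y x = (if x = 0 then 0 else norm x * Lim (at 0) (dq x y))"
  by (simp add: sip_def dq_def[abs_def])

lemma dq_le:
  fixes x y :: "'a::real_normed_vector"
  assumes r: "r > 0" and s: "s > 0"
  shows "dq x y (-r) \<le> dq x y s"
proof -
  have eq: "(r+s) *\<^sub>R x = r *\<^sub>R (x + s *\<^sub>R y) + s *\<^sub>R (x - r *\<^sub>R y)"
    by (simp add: algebra_simps)
  have "(r+s) * norm x = norm ((r+s) *\<^sub>R x)" using r s by simp
  also have "\<dots> \<le> norm (r *\<^sub>R (x + s *\<^sub>R y)) + norm (s *\<^sub>R (x - r *\<^sub>R y))"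
    unfolding eq by (rule norm_triangle_ineq)
  also have "\<dots> = r * norm (x + s *\<^sub>R y) + s * norm (x - r *\<^sub>R y)" using r s by simp
  finally have *: "(r+s) * norm x \<le> r * norm (x + s *\<^sub>R y) + s * norm (x - r *\<^sub>R y)" .
  have "dq x y (-r) = (norm x - norm (x - r *\<^sub>R y)) / r"
    unfolding dq_def using r by (simp add: field_simps)
  moreover have "(norm x - norm (x - r *\<^sub>R y)) / r \<le> (norm (x + s *\<^sub>R y) - norm x) / s"
    using r s * by (simp add: field_simps)
  ultimately show ?thesis by (simp add: dq_def)
qed

lemma rho_bound:
  fixes u w :: "'a::real_normed_vector"
  assumes "norm u = 1" "norm w = \<tau>"
  shows "(norm (u + w) + norm (u - w)) / 2 - 1 \<le> modulus_of_smoothness TYPE('a) \<tau>"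
  unfolding modulus_of_smoothness_def
proof (rule cSUP_upper2[where x="(u,w)"])
  show "bdd_above ((\<lambda>p. (norm (fst p + snd p) + norm (fst p - snd p)) / 2 - 1) `
          {(x, y::'a). norm x = 1 \<and> norm y = \<tau>})"
  proof (rule bdd_aboveI2[where M=\<tau>])
    fix p :: "'a \<times> 'a" assume "p \<in> {(x, y::'a). norm x = 1 \<and> norm y = \<tau>}"
    then obtain a b where p: "p = (a,b)" "norm a = 1" "norm b = \<tau>" by auto
    have "norm (a+b) \<le> norm a + norm b" by (rule norm_triangle_ineq)
    moreover have "norm (a-b) \<le> norm a + norm b" by (rule norm_triangle_ineq4)
    ultimately show "(norm (fst p + snd p) + norm (fst p - snd p)) / 2 - 1 \<le> \<tau>" using p by (simp add: field_simps)
  qed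
qed (use assms in auto)

lemma h_lim:
  fixes x y :: "'a::real_normed_vector"
  assumes sm: "uniformly_smooth TYPE('a)" and x: "x \<noteq> 0"
  shows "((\<lambda>r. dq x y r - dq x y (-r)) \<longlongrightarrow> 0) (at_right 0)"
proof (cases "y = 0")
  case True
  then show ?thesis by (simp add: dq_def)
next
  case False
  define n where "n = norm x"
  define c where "c = norm y / n"
  define \<rho> where "\<rho> = modulus_of_smoothness TYPE('a)"
  have n: "n > 0" using x n_def by simp
  have c: "c > 0" using False n c_def by simp
  have cr: "filterlim (\<lambda>r. c * r) (at_right 0) (at_right (0::real))"
    unfolding filterlim_at
  proof
    show "\<forall>\<^sub>F r in at_right 0. c * r \<in> {0<..} \<and> c * r \<noteq> 0"
      unfolding eventually_at_right_field using c by (intro exI[of _ 1]) auto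
    show "((\<lambda>r. c * r) \<longlongrightarrow> 0) (at_right 0)"
      by (rule tendsto_mult_right_zero) (rule tendsto_ident_at)
  qed
  have rl: "((\<lambda>t. \<rho> t / t) \<longlongrightarrow> 0) (at_right 0)"
    using sm unfolding uniformly_smooth_def \<rho>_def .
  have rl2: "((\<lambda>r. \<rho> (c*r) / (c*r)) \<longlongrightarrow> 0) (at_right 0)"
    using filterlim_compose[OF rl cr] by simp
  have lim2: "((\<lambda>r. 2 * norm y * (\<rho> (c*r) / (c*r))) \<longlongrightarrow> 0) (at_right 0)"
    using tendsto_mult_right_zero[OF rl2, of "2 * norm y"] by simp
  have bnd: "0 \<le> dq x y r - dq x y (-r) \<and> dq x y r - dq x y (-r) \<le> 2 * norm y * (\<rho> (c*r) / (c*r))"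
    if r: "r > 0" for r
  proof
    show "0 \<le> dq x y r - dq x y (-r)" using dq_le[OF r r] by simp
    define u where "u = (1/n) *\<^sub>R x"
    define w where "w = (r/n) *\<^sub>R y"
    have nu: "norm u = 1" using n by (simp add: u_def n_def)
    have nw: "norm w = c * r" using n r by (simp add: w_def c_def)
    have e1: "x + r *\<^sub>R y = n *\<^sub>R (u + w)" using n by (simp add: u_def w_def algebra_simps)
    have e2: "x - r *\<^sub>R y = n *\<^sub>R (u - w)" using n by (simp add: u_def w_def algebra_simps)
    have rb: "(norm (u + w) + norm (u - w)) / 2 - 1 \<le> \<rho> (c*r)"
      using rho_bound[OF nu nw] by (simp add: \<rho>_def)
    have "dq x y r - dq x y (-r) = (norm (x + r *\<^sub>R y) + norm (x - r *\<^sub>R y) - 2 * n) / r"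
      unfolding dq_def n_def using r by (simp add: field_simps)
    also have "\<dots> = n * ((norm (u + w) + norm (u - w)) - 2) / r"
      unfolding e1 e2 norm_scaleR using n by (simp add: algebra_simps)
    also have "\<dots> \<le> n * (2 * \<rho> (c*r)) / r"
      using rb n r by (intro divide_right_mono mult_left_mono) (auto simp: field_simps)
    also have "\<dots> = 2 * norm y * (\<rho> (c*r) / (c*r))"
      using n r c by (simp add: c_def field_simps)
    finally show "dq x y r - dq x y (-r) \<le> 2 * norm y * (\<rho> (c*r) / (c*r))" .
  qed
  show ?thesis
  proof (rule tendsto_sandwich[OF _ _ tendsto_const lim2])
    show "\<forall>\<^sub>F r in at_right 0. 0 \<le> dq x y r - dq x y (-r)"
      unfolding eventually_at_right_field using bnd by (intro exI[of _ 1]) auto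
    show "\<forall>\<^sub>F r in at_right 0. dq x y r - dq x y (-r) \<le> 2 * norm y * (\<rho> (c*r) / (c*r))"
      unfolding eventually_at_right_field using bnd by (intro exI[of _ 1]) auto
  qed
qed


lemma dq_conv:
  fixes x y :: "'a::real_normed_vector"
  assumes sm: "uniformly_smooth TYPE('a)" and x: "x \<noteq> 0"
  shows "(dq x y \<longlongrightarrow> Lim (at 0) (dq x y)) (at (0::real))"
proof -
  define h where "h r = dq x y r - dq x y (-r)" for r
  have h0: "(h \<longlongrightarrow> 0) (at_right 0)" unfolding h_def using h_lim[OF sm x] .
  define L where "L = Inf (dq x y ` {0<..})"
  have bdd: "bdd_below (dq x y ` {0<..})"
    by (rule bdd_belowI2[where m="dq x y (-1)"]) (simp add: dq_le)
  have Lle: "L \<le> dq x y r" if "r > 0" for r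
    unfolding L_def using bdd that by (intro cInf_lower) auto
  have leL: "dq x y (-r) \<le> L" if "r > 0" for r
    unfolding L_def using that by (intro cInf_greatest) (auto intro: dq_le)
  have right: "(dq x y \<longlongrightarrow> L) (at_right 0)"
  proof (rule tendsto_sandwich[OF _ _ tendsto_const])
    show "\<forall>\<^sub>F r in at_right 0. L \<le> dq x y r"
      unfolding eventually_at_right_field using Lle by (intro exI[of _ 1]) auto
    show "\<forall>\<^sub>F r in at_right 0. dq x y r \<le> L + h r"
      unfolding eventually_at_right_field using leL by (intro exI[of _ 1]) (auto simp: h_def)
    show "((\<lambda>r. L + h r) \<longlongrightarrow> L) (at_right 0)"
      using tendsto_add[OF tendsto_const h0, of L] by simp
  qed
  have "((\<lambda>r. dq x y (-r)) \<longlongrightarrow> L) (at_right 0)"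
  proof (rule tendsto_sandwich[OF _ _ _ tendsto_const])
    show "\<forall>\<^sub>F r in at_right 0. L - h r \<le> dq x y (-r)"
      unfolding eventually_at_right_field using Lle by (intro exI[of _ 1]) (auto simp: h_def)
    show "\<forall>\<^sub>F r in at_right 0. dq x y (-r) \<le> L"
      unfolding eventually_at_right_field using leL by (intro exI[of _ 1]) auto
    show "((\<lambda>r. L - h r) \<longlongrightarrow> L) (at_right 0)"
      using tendsto_diff[OF tendsto_const h0, of L] by simp
  qed
  hence left: "(dq x y \<longlongrightarrow> L) (at_left 0)"
    by (simp add: filterlim_at_left_to_right)
  have lim: "(dq x y \<longlongrightarrow> L) (at 0)"
    using left right by (simp add: filterlim_at_split)
  hence "Lim (at 0) (dq x y) = L" by (intro tendsto_Lim) auto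
  with lim show ?thesis by simp
qed

lemma sip_self: "sip x x = (norm x)^2"
proof (cases "x = 0")
  case True then show ?thesis by (simp add: sip_dq)
next
  case False
  have "\<forall>\<^sub>F t in at (0::real). dq x x t = norm x"
    unfolding eventually_at
  proof (intro exI[of _ 1] conjI allI impI ballI)
    fix t :: real assume "t \<noteq> 0 \<and> dist t 0 < 1"
    then have t: "t \<noteq> 0" "\<bar>t\<bar> < 1" by auto
    have "x + t *\<^sub>R x = (1 + t) *\<^sub>R x" by (simp add: algebra_simps)
    moreover have "\<bar>1 + t\<bar> = 1 + t" using t by auto
    ultimately have "norm (x + t *\<^sub>R x) = (1 + t) * norm x" by simp
    then show "dq x x t = norm x" unfolding dq_def using t by (simp add: field_simps)
  qed simp
  then have "(dq x x \<longlongrightarrow> norm x) (at 0)" by (rule tendsto_eventually)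
  then have "Lim (at 0) (dq x x) = norm x" by (intro tendsto_Lim) auto
  then show ?thesis using False by (simp add: sip_dq power2_eq_square)
qed

lemma dq_abs: "\<bar>dq x y t\<bar> \<le> norm y"
proof (cases "t = 0")
  case True then show ?thesis by (simp add: dq_def)
next
  case False
  have "\<bar>norm (x + t *\<^sub>R y) - norm x\<bar> \<le> norm (x + t *\<^sub>R y - x)" by (rule norm_triangle_ineq3)
  also have "\<dots> = \<bar>t\<bar> * norm y" by simp
  finally show ?thesis using False unfolding dq_def by (simp add: abs_divide divide_le_eq mult.commute)
qed

lemma sip_cs:
  fixes x y :: "'a::real_normed_vector"
  assumes sm: "uniformly_smooth TYPE('a)"
  shows "\<bar>sip y x\<bar> \<le> norm y * norm x"
proof (cases "x = 0")
  case True then show ?thesis by (simp add: sip_dq)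
next
  case False
  have lim1: "((\<lambda>t. \<bar>dq x y t\<bar>) \<longlongrightarrow> \<bar>Lim (at 0) (dq x y)\<bar>) (at 0)"
    by (rule tendsto_rabs[OF dq_conv[OF sm False]])
  have "\<bar>Lim (at 0) (dq x y)\<bar> \<le> norm y"
    by (rule tendsto_le[OF _ tendsto_const lim1]) (auto simp: dq_abs)
  then show ?thesis using False by (simp add: sip_dq abs_mult mult.commute mult_left_mono)
qed

lemma sip_convex:
  fixes x y :: "'a::real_normed_vector"
  assumes sm: "uniformly_smooth TYPE('a)" and x: "x \<noteq> 0"
  shows "Lim (at 0) (dq x y) \<le> norm (x + y) - norm x"
proof -
  have "(dq x y \<longlongrightarrow> Lim (at 0) (dq x y)) (at_right 0)"
    using dq_conv[OF sm x] by (simp add: filterlim_at_split)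
  moreover have "\<forall>\<^sub>F s in at_right 0. dq x y s \<le> norm (x + y) - norm x"
    unfolding eventually_at_right_field
  proof (intro exI[of _ 1] conjI allI impI)
    fix s :: real assume s: "0 < s" "s < 1"
    have "x + s *\<^sub>R y = (1 - s) *\<^sub>R x + s *\<^sub>R (x + y)" by (simp add: algebra_simps)
    then have "norm (x + s *\<^sub>R y) \<le> norm ((1 - s) *\<^sub>R x) + norm (s *\<^sub>R (x + y))"
      by (metis norm_triangle_ineq)
    also have "\<dots> = (1 - s) * norm x + s * norm (x + y)" using s by simp
    finally have "norm (x + s *\<^sub>R y) - norm x \<le> s * (norm (x + y) - norm x)"
      by (simp add: algebra_simps)
    then show "dq x y s \<le> norm (x + y) - norm x"
      unfolding dq_def using s by (simp add: divide_le_eq mult.commute)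
  qed simp
  ultimately show ?thesis by (rule tendsto_le[OF _ tendsto_const, rotated]) auto
qed

lemma sip_sum:
  assumes "dual_in_span m xs f0" "interpolates m xs ys f0"
  obtains c where "\<And>f. interpolates m xs ys f \<Longrightarrow> sip f f0 = (\<Sum>i<m. c i * ys i)"
proof -
  obtain c where c: "\<And>y. sip y f0 = (\<Sum>i<m. c i * sip y (xs i))"
    using assms(1) unfolding dual_in_span_def by auto
  have "sip f f0 = (\<Sum>i<m. c i * ys i)" if "interpolates m xs ys f" for f
    using that unfolding c interpolates_def by (intro sum.cong) auto
  then show ?thesis using that by blast
qed

lemma key:
  fixes f0 :: "'a::real_normed_vector"
  assumes sm: "uniformly_smooth TYPE('a)"
    and d: "dual_in_span m xs f0" and i0: "interpolates m xs ys f0"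
    and i: "interpolates m xs ys f"
  shows "norm f0 \<le> norm f"
proof -
  obtain c where c: "\<And>f. interpolates m xs ys f \<Longrightarrow> sip f f0 = (\<Sum>i<m. c i * ys i)"
    using sip_sum[OF d i0] by blast
  have "(norm f0)^2 = sip f f0" using c[OF i] c[OF i0] sip_self[of f0] by simp
  also have "\<dots> \<le> norm f * norm f0" using sip_cs[OF sm, of f f0] by simp
  finally have "norm f0 * norm f0 \<le> norm f * norm f0" by (simp add: power2_eq_square)
  then show ?thesis
    by (cases "norm f0 = 0") (auto simp: mult_le_cancel_right)
qed

lemma uniq:
  fixes f0 :: "'a::real_normed_vector"
  assumes uc: "uniformly_convex TYPE('a)" and sm: "uniformly_smooth TYPE('a)"
    and d: "dual_in_span m xs f0" and i0: "interpolates m xs ys f0"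
    and i1: "interpolates m xs ys f1" and eqn: "norm f1 = norm f0"
  shows "f1 = f0"
proof (cases "f0 = 0")
  case True then show ?thesis using eqn by simp
next
  case False
  define r where "r = norm f0"
  have r: "r > 0" using False r_def by simp
  obtain c where c: "\<And>f. interpolates m xs ys f \<Longrightarrow> sip f f0 = (\<Sum>i<m. c i * ys i)"
    using sip_sum[OF d i0] by blast
  have "sip f1 f0 = r * r" using c[OF i1] c[OF i0] sip_self[of f0] r_def by (simp add: power2_eq_square)
  then have "r * Lim (at 0) (dq f0 f1) = r * r" using False r_def by (simp add: sip_dq)
  then have "Lim (at 0) (dq f0 f1) = r" using r by simp
  with sip_convex[OF sm False, of f1] have ge: "2 * r \<le> norm (f0 + f1)" using r_def by simp
  have le: "norm (f0 + f1) \<le> 2 * r" using norm_triangle_ineq[of f0 f1] eqn r_def by simp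
  show ?thesis
  proof (rule ccontr)
    assume ne: "f1 \<noteq> f0"
    define u where "u = (1/r) *\<^sub>R f0"
    define v where "v = (1/r) *\<^sub>R f1"
    have nu: "norm u = 1" "norm v = 1" using r eqn by (auto simp: u_def v_def r_def)
    have "u - v \<noteq> 0" using ne r by (simp add: u_def v_def algebra_simps)
    then have eps: "norm (u - v) > 0" by simp
    from uc[unfolded uniformly_convex_def, rule_format, OF eps] obtain \<delta> where
      \<delta>: "\<delta> > 0" "\<And>x y::'a. norm x \<le> 1 \<and> norm y \<le> 1 \<and> norm (x - y) \<ge> norm (u - v)
        \<Longrightarrow> norm ((1/2) *\<^sub>R (x + y)) \<le> 1 - \<delta>" by blast
    have "norm ((1/2) *\<^sub>R (u + v)) \<le> 1 - \<delta>" using \<delta>(2)[of u v] nu by simp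
    moreover have "(1/2) *\<^sub>R (u + v) = (1/(2*r)) *\<^sub>R (f0 + f1)"
      by (simp add: u_def v_def algebra_simps)
    moreover have "norm ((1/(2*r)) *\<^sub>R (f0 + f1)) = 1"
    proof -
      have nf: "norm (f0 + f1) = 2 * r" using ge le by simp
      show ?thesis unfolding norm_scaleR nf using r by simp
    qed
    ultimately have "norm ((1/2) *\<^sub>R (u + v)) = 1 \<and> norm ((1/2) *\<^sub>R (u + v)) \<le> 1 - \<delta>"
      by (simp only:)
    then show False using \<delta>(1) by linarith
  qed
qed

theorem theorem4p1:
  fixes \<Omega> :: "'a::banach \<Rightarrow> real"
    and m :: nat and xs :: "nat \<Rightarrow> 'a" and ys :: "nat \<Rightarrow> real" and f0 :: 'a
  assumes "uniform_space TYPE('a)"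
    and "admissible \<Omega>"
    and "m \<ge> 1"
    and "\<exists>f. interpolates m xs ys f"
    and "dual_in_span m xs f0"
  shows "is_interp_min \<Omega> m xs ys f0 \<longleftrightarrow> is_interp_min norm m xs ys f0"
proof -
  have uc: "uniformly_convex TYPE('a)" and sm: "uniformly_smooth TYPE('a)"
    using assms(1) unfolding uniform_space_def by auto
  show ?thesis
  proof
    assume "is_interp_min \<Omega> m xs ys f0"
    then have i0: "interpolates m xs ys f0" unfolding is_interp_min_def by simp
    show "is_interp_min norm m xs ys f0"
      unfolding is_interp_min_def using i0 key[OF sm assms(5) i0] by blast
  next
    assume mn: "is_interp_min norm m xs ys f0"
    then have i0: "interpolates m xs ys f0" unfolding is_interp_min_def by simp
    obtain f1 where f1: "is_interp_min \<Omega> m xs ys f1" "dual_in_span m xs f1"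
      using assms(2,3,4) unfolding admissible_def by blast
    have i1: "interpolates m xs ys f1" using f1(1) unfolding is_interp_min_def by simp
    have "norm f1 \<le> norm f0" using key[OF sm f1(2) i1 i0] .
    moreover have "norm f0 \<le> norm f1" using mn i1 unfolding is_interp_min_def by simp
    ultimately have "f0 = f1" using uniq[OF uc sm f1(2) i1 i0] by simp
    then show "is_interp_min \<Omega> m xs ys f0" using f1(1) by simp
  qed
qed

end
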